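(* Let $F = \{f_1,\dots,f_N\}$ with $f_i(z) = a_i z + b_i$, $a_i,b_i\in\mathbb{Z}$. Let $z \in \mathbb{Z}$, let $\alpha, \beta$ be reduced regular expressions, and let $\ell$ be a finite (possibly empty) sequence of literals $i$ each with $a_i > 0$. Then: (1) $I(z, \ell \alpha^* \beta) \iff I(z, \ell \beta) \lor I(P_\ell(z), \alpha)$; (2) $I(z, \ell \alpha^* ) \iff I(z, \ell) \lor I(P_\ell(z), \alpha)$; (3) $I(z, \alpha^* \beta) \iff I(z, \alpha) \lor I(z, \beta)$; (4) $I(z, \alpha^* ) \iff I(z,\alpha)$.
   Context: Regular expressions are over the alphabet $\{1,\dots,N\}$ (literals), built with concatenation (written multiplicatively), union, Kleene star, $\epsilon$ (empty string) and $\emptyset$ (empty language); $L(E)$ is the language of $E$. For a word $s = e_1 e_2 \cdots e_K$ put $P_s = f_{e_K} \circ \dots \circ f_{e_1}$ (with $P_\epsilon$ the identity). A regular expression is reduced if it contains no $\emptyset$ symbol, no union operation, and every literal $i$ occurring in it satisfies $a_i > 0$. For $z \in \mathbb{Z}$ and a reduced expression $E$, $I(z,E)$ is the statement: there exists $s \in L(E)$ with $P_s(z) > z$. *)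

theory Defs
  imports Main
begin

datatype rexp =
    Zero
  | One
  | Lit nat
  | Plus rexp rexp
  | Times rexp rexp
  | Star rexp

definition conc :: "nat list set \<Rightarrow> nat list set \<Rightarrow> nat list set" where
  "conc A B = {u @ v | u v. u \<in> A \<and> v \<in> B}"

inductive_set kstar :: "nat list set \<Rightarrow> nat list set" for A where
  kstar_Nil: "[] \<in> kstar A"
| kstar_app: "u \<in> A \<Longrightarrow> v \<in> kstar A \<Longrightarrow> u @ v \<in> kstar A"

fun lang :: "rexp \<Rightarrow> nat list set" where
  "lang Zero = {}"
| "lang One = {[]}"
| "lang (Lit i) = {[i]}"
| "lang (Plus r s) = lang r \<union> lang s"
| "lang (Times r s) = conc (lang r) (lang s)"
| "lang (Star r) = kstar (lang r)"

fun lits :: "rexp \<Rightarrow> nat set" where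
  "lits Zero = {}"
| "lits One = {}"
| "lits (Lit i) = {i}"
| "lits (Plus r s) = lits r \<union> lits s"
| "lits (Times r s) = lits r \<union> lits s"
| "lits (Star r) = lits r"

definition over_alphabet :: "nat \<Rightarrow> rexp \<Rightarrow> bool" where
  "over_alphabet N E \<longleftrightarrow> lits E \<subseteq> {1..N}"

fun no_zero_plus :: "rexp \<Rightarrow> bool" where
  "no_zero_plus Zero = False"
| "no_zero_plus One = True"
| "no_zero_plus (Lit i) = True"
| "no_zero_plus (Plus r s) = False"
| "no_zero_plus (Times r s) = (no_zero_plus r \<and> no_zero_plus s)"
| "no_zero_plus (Star r) = no_zero_plus r"

definition reduced :: "(nat \<Rightarrow> int) \<Rightarrow> rexp \<Rightarrow> bool" where
  "reduced a E \<longleftrightarrow> no_zero_plus E \<and> (\<forall>i\<in>lits E. a i > 0)"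

text \<open>P_s = f_{e_K} o ... o f_{e_1}, where f_i z = a_i z + b_i.\<close>
definition P :: "(nat \<Rightarrow> int) \<Rightarrow> (nat \<Rightarrow> int) \<Rightarrow> nat list \<Rightarrow> int \<Rightarrow> int" where
  "P a b s z = fold (\<lambda>i x. a i * x + b i) s z"

definition I :: "(nat \<Rightarrow> int) \<Rightarrow> (nat \<Rightarrow> int) \<Rightarrow> int \<Rightarrow> rexp \<Rightarrow> bool" where
  "I a b z E \<longleftrightarrow> (\<exists>s\<in>lang E. P a b s z > z)"

fun word :: "nat list \<Rightarrow> rexp" where
  "word [] = One"
| "word (i # l) = Times (Lit i) (word l)"

end

theory Submission
  imports Defs
begin

lemma P_append: "P a b (u@v) z = P a b v (P a b u z)"
  by (simp add: P_def)

lemma P_Nil[simp]: "P a b [] z = z" by (simp add: P_def)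

lemma P_slope: "\<forall>i\<in>set s. a i > 0 \<Longrightarrow> y \<le> x \<Longrightarrow> P a b s x - P a b s y \<ge> x - y"
proof (induction s arbitrary: x y)
  case Nil then show ?case by simp
next
  case (Cons i s)
  have ai: "a i \<ge> 1" using Cons.prems by auto
  have "a i * (x - y) \<ge> x - y" using ai Cons.prems(2)
    using mult_right_mono[OF ai, of "x - y"] by simp
  hence le: "a i * y + b i \<le> a i * x + b i" using Cons.prems(2) by (simp add: algebra_simps)
  have "P a b (i#s) x - P a b (i#s) y = P a b s (a i * x + b i) - P a b s (a i * y + b i)"
    by (simp add: P_def)
  also have "\<dots> \<ge> (a i * x + b i) - (a i * y + b i)"
    using Cons.IH[OF _ le] Cons.prems by auto
  finally show ?case using \<open>a i * (x - y) \<ge> x - y\<close> by (simp add: algebra_simps)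
qed

lemma P_mono: "\<forall>i\<in>set s. a i > 0 \<Longrightarrow> y \<le> x \<Longrightarrow> P a b s y \<le> P a b s x"
  using P_slope[of s a y x b] by simp

lemma kstar_lits: "v \<in> kstar A \<Longrightarrow> (\<And>u. u \<in> A \<Longrightarrow> set u \<subseteq> S) \<Longrightarrow> set v \<subseteq> S"
  by (induction rule: kstar.induct) auto

lemma lang_lits: "s \<in> lang E \<Longrightarrow> set s \<subseteq> lits E"
proof (induction E arbitrary: s)
  case (Times r1 r2)
  then obtain u v where "s = u @ v" "u \<in> lang r1" "v \<in> lang r2" by (auto simp: conc_def)
  then show ?case using Times.IH by fastforce
next
  case (Star r) then show ?case using kstar_lits[of s "lang r" "lits r"] by auto
qed auto

lemma ex_conc: "(\<exists>s\<in>conc A B. Q s) \<longleftrightarrow> (\<exists>u\<in>A. \<exists>v\<in>B. Q (u@v))"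
  by (auto simp: conc_def)

lemma lang_word: "lang (word l) = {l}"
  by (induction l) (auto simp: conc_def)

lemma lang_ne: "no_zero_plus E \<Longrightarrow> \<exists>s. s \<in> lang E"
proof (induction E)
  case (Times r1 r2) then show ?case by (auto simp: conc_def)
next
  case (Star r) then show ?case using kstar.kstar_Nil by auto
qed auto

lemma star_le:
  assumes "v \<in> kstar A" "\<forall>s\<in>A. P a b s w \<le> w" "\<forall>s\<in>A. \<forall>i\<in>set s. a i > 0"
  shows "P a b v w \<le> w \<and> (\<forall>i\<in>set v. a i > 0)"
  using assms
proof (induction rule: kstar.induct)
  case kstar_Nil then show ?case by simp
next
  case (kstar_app u v)
  then have "P a b v (P a b u w) \<le> P a b v w"
    by (intro P_mono) auto
  then show ?case using kstar_app by (auto simp: P_append)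
qed

lemma rep_in: "s \<in> A \<Longrightarrow> concat (replicate k s) \<in> kstar A"
  by (induction k) (auto intro: kstar.intros)

lemma rep_grow:
  assumes "\<forall>i\<in>set s. a i > 0" "P a b s w > w"
  shows "P a b (concat (replicate k s)) w \<ge> w + int k"
proof (induction k)
  case 0 then show ?case by simp
next
  case (Suc k)
  let ?v = "concat (replicate k s)"
  have "P a b (concat (replicate (Suc k) s)) w = P a b ?v (P a b s w)"
    by (simp add: P_append)
  also have "\<dots> \<ge> P a b s w - w + P a b ?v w"
    using P_slope[of ?v a w "P a b s w" b] assms by auto
  finally show ?case using Suc assms by simp
qed

lemma core:
  assumes pa: "\<forall>s\<in>A. \<forall>i\<in>set s. a i > 0" and pt: "\<forall>t\<in>T. \<forall>i\<in>set t. a i > 0"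
    and ne: "T \<noteq> {}"
  shows "(\<exists>v\<in>kstar A. \<exists>t\<in>T. P a b t (P a b v w) > z) \<longleftrightarrow>
         (\<exists>t\<in>T. P a b t w > z) \<or> (\<exists>s\<in>A. P a b s w > w)"
proof
  assume "\<exists>v\<in>kstar A. \<exists>t\<in>T. P a b t (P a b v w) > z"
  then obtain v t where v: "v \<in> kstar A" and t: "t \<in> T" and g: "P a b t (P a b v w) > z" by blast
  show "(\<exists>t\<in>T. P a b t w > z) \<or> (\<exists>s\<in>A. P a b s w > w)"
  proof (rule ccontr)
    assume c: "\<not> ?thesis"
    hence "\<forall>s\<in>A. P a b s w \<le> w" by auto
    hence "P a b v w \<le> w" using star_le[OF v _ pa] by auto
    hence "P a b t (P a b v w) \<le> P a b t w" using P_mono pt t by blast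
    thus False using c t g by auto
  qed
next
  assume "(\<exists>t\<in>T. P a b t w > z) \<or> (\<exists>s\<in>A. P a b s w > w)"
  then show "\<exists>v\<in>kstar A. \<exists>t\<in>T. P a b t (P a b v w) > z"
  proof
    assume "\<exists>t\<in>T. P a b t w > z"
    then show ?thesis using kstar.kstar_Nil by force
  next
    assume "\<exists>s\<in>A. P a b s w > w"
    then obtain s where s: "s \<in> A" "P a b s w > w" by blast
    obtain t where t: "t \<in> T" using ne by blast
    define k where "k = nat (z - P a b t w + 1)"
    let ?v = "concat (replicate k s)"
    have g: "P a b ?v w \<ge> w + int k" using rep_grow[OF _ s(2)] pa s by auto
    have "P a b t (P a b ?v w) \<ge> P a b ?v w - w + P a b t w"
      using P_slope[of t a w "P a b ?v w" b] pt t g by auto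
    hence "P a b t (P a b ?v w) > z" using g unfolding k_def by linarith
    thus ?thesis using rep_in[OF s(1)] t by blast
  qed
qed

theorem mainTheorem6:
  fixes N :: nat and a b :: "nat \<Rightarrow> int" and z :: int
    and \<alpha> \<beta> :: rexp and l :: "nat list"
  assumes "over_alphabet N \<alpha>" and "reduced a \<alpha>"
    and "over_alphabet N \<beta>" and "reduced a \<beta>"
    and "\<forall>i\<in>set l. i \<in> {1..N} \<and> a i > 0"
  shows "(I a b z (Times (word l) (Times (Star \<alpha>) \<beta>)) \<longleftrightarrow>
            I a b z (Times (word l) \<beta>) \<or> I a b (P a b l z) \<alpha>)
       \<and> (I a b z (Times (word l) (Star \<alpha>)) \<longleftrightarrow>
            I a b z (word l) \<or> I a b (P a b l z) \<alpha>)
       \<and> (I a b z (Times (Star \<alpha>) \<beta>) \<longleftrightarrow> I a b z \<alpha> \<or> I a b z \<beta>)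
       \<and> (I a b z (Star \<alpha>) \<longleftrightarrow> I a b z \<alpha>)"
proof -
  have pa: "\<forall>s\<in>lang \<alpha>. \<forall>i\<in>set s. a i > 0"
    using assms(2) lang_lits unfolding reduced_def by blast
  have pb: "\<forall>s\<in>lang \<beta>. \<forall>i\<in>set s. a i > 0"
    using assms(4) lang_lits unfolding reduced_def by blast
  have neb: "lang \<beta> \<noteq> {}" using assms(4) lang_ne unfolding reduced_def by blast
  have p1: "\<forall>t\<in>{[]}. \<forall>i\<in>set t. a i > (0::int)" by simp
  note c1 = core[where b=b and w="P a b l z" and z=z, OF pa pb neb]
  note c2 = core[where b=b and w="P a b l z" and z=z, OF pa p1]
  note c3 = core[where b=b and w=z and z=z, OF pa pb neb]
  note c4 = core[where b=b and w=z and z=z, OF pa p1]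
  have e1: "I a b z (Times (word l) (Times (Star \<alpha>) \<beta>)) \<longleftrightarrow>
     (\<exists>v\<in>kstar (lang \<alpha>). \<exists>t\<in>lang \<beta>. P a b t (P a b v (P a b l z)) > z)"
    by (simp add: I_def ex_conc lang_word P_append)
  have e1': "I a b z (Times (word l) \<beta>) \<longleftrightarrow> (\<exists>t\<in>lang \<beta>. P a b t (P a b l z) > z)"
    by (simp add: I_def ex_conc lang_word P_append)
  have e2: "I a b z (Times (word l) (Star \<alpha>)) \<longleftrightarrow>
     (\<exists>v\<in>kstar (lang \<alpha>). \<exists>t\<in>{[]}. P a b t (P a b v (P a b l z)) > z)"
    by (simp add: I_def ex_conc lang_word P_append)
  have e2': "I a b z (word l) \<longleftrightarrow> (\<exists>t\<in>{[]}. P a b t (P a b l z) > z)"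
    by (auto simp: I_def lang_word)
  have e3: "I a b z (Times (Star \<alpha>) \<beta>) \<longleftrightarrow>
     (\<exists>v\<in>kstar (lang \<alpha>). \<exists>t\<in>lang \<beta>. P a b t (P a b v z) > z)"
    by (simp add: I_def ex_conc P_append)
  have e4: "I a b z (Star \<alpha>) \<longleftrightarrow> (\<exists>v\<in>kstar (lang \<alpha>). \<exists>t\<in>{[]}. P a b t (P a b v z) > z)"
    by (auto simp: I_def)
  have e5: "I a b z \<beta> \<longleftrightarrow> (\<exists>t\<in>lang \<beta>. P a b t z > z)" by (simp add: I_def)
  have e6: "I a b z \<alpha> \<longleftrightarrow> (\<exists>s\<in>lang \<alpha>. P a b s z > z)" by (simp add: I_def)
  have e7: "I a b (P a b l z) \<alpha> \<longleftrightarrow> (\<exists>s\<in>lang \<alpha>. P a b s (P a b l z) > P a b l z)"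
    by (simp add: I_def)
  show ?thesis
    using c1 c2 c3 c4 e1 e1' e2 e2' e3 e4 e5 e6 e7 by auto
qed

end
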